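(* Let $X$ be a real Hilbert space, let $A$ be a nonempty closed convex subset of $X$ and $B$ a closed affine subspace of $X$ (with $A\cap B$ possibly empty). Let $g:=P_{\overline{B-A}}\,0$ and assume $g\in B-A$, so that $E:=A\cap(B-g)$ and $F:=(A+g)\cap B$ are nonempty. Let $T:=\mathrm{Id}-P_A+P_BR_A$ and let $x\in X$. Then: (i) $(P_AT^nx)_{n\in\mathbb{N}}$ converges weakly to some point in $E$; (ii) $(P_BT^nx)_{n\in\mathbb{N}}$ converges weakly to some point in $F$.
   Context: For a nonempty closed convex set $C\subseteq X$, $P_C$ denotes the metric projection onto $C$ and $R_C:=2P_C-\mathrm{Id}$. $T$ is the Douglas–Rachford operator for the ordered pair $(A,B)$. $g$ is the element of minimal norm in the closure of $B-A=\{b-a:a\in A,b\in B\}$. *)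

theory Defs
  imports "HOL-Analysis.Analysis"
begin

text \<open>Metric projection onto a set C (in a real Hilbert space): the unique nearest point.
  For nonempty closed convex C in a Hilbert space it exists and is unique.\<close>
definition proj :: "'a::{real_inner,complete_space} set \<Rightarrow> 'a \<Rightarrow> 'a" where
  "proj C x = (THE p. p \<in> C \<and> (\<forall>y\<in>C. norm (x - p) \<le> norm (x - y)))"

definition refl :: "'a::{real_inner,complete_space} set \<Rightarrow> 'a \<Rightarrow> 'a" where
  "refl C x = 2 *\<^sub>R proj C x - x"

definition DR :: "'a::{real_inner,complete_space} set \<Rightarrow> 'a set \<Rightarrow> 'a \<Rightarrow> 'a" where
  "DR A B x = x - proj A x + proj B (refl A x)"

definition weakly_conv :: "(nat \<Rightarrow> 'a::real_inner) \<Rightarrow> 'a \<Rightarrow> bool" where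
  "weakly_conv s y \<longleftrightarrow> (\<forall>z. (\<lambda>n. inner (s n) z) \<longlonglongrightarrow> inner y z)"

end

theory Submission imports Defs "HOL-Library.Diagonal_Subsequence" begin

lemma proj_exists:
  fixes C :: "'a::{real_inner,complete_space} set"
  assumes "closed C" "convex C" "C \<noteq> {}"
  shows "\<exists>p\<in>C. \<forall>y\<in>C. norm (x - p) \<le> norm (x - y)"
proof -
  define d where "d = Inf ((\<lambda>y. norm (x - y)) ` C)"
  have bdd: "bdd_below ((\<lambda>y. norm (x - y)) ` C)" by (rule bdd_belowI[of _ 0]) auto
  have dle: "d \<le> norm (x - y)" if "y \<in> C" for y
    unfolding d_def using bdd that by (auto intro: cInf_lower)
  have d0: "0 \<le> d" unfolding d_def using assms(3) by (auto intro: cInf_greatest)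
  have "\<exists>c\<in>C. norm (x - c)^2 < d^2 + 1/(Suc n)" for n
  proof -
    have "sqrt (d^2 + 1/Suc n) > d" using d0
      by (metis add_strict_increasing2 less_add_same_cancel1 of_nat_0_less_iff real_less_rsqrt zero_less_Suc zero_less_divide_1_iff zero_le_power2 zero_less_power2 power2_less_imp_less  order_refl)
    then obtain c where "c \<in> C" "norm (x - c) < sqrt (d^2 + 1/Suc n)"
      using cInf_lessD[of "(\<lambda>y. norm (x - y)) ` C" "sqrt (d^2 + 1/Suc n)"] assms(3)
      unfolding d_def by auto
    then have "norm (x - c)^2 < d^2 + 1/Suc n"
      by (smt (verit) norm_ge_zero power_strict_mono real_sqrt_pow2 zero_le_power2 of_nat_0_le_iff divide_nonneg_nonneg zero_less_numeral pos2)
    with \<open>c \<in> C\<close> show ?thesis by blast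
  qed
  then obtain c where cC: "\<And>n. c n \<in> C" and cn: "\<And>n. norm (x - c n)^2 < d^2 + 1/(Suc n)"
    by metis
  have par: "norm (c m - c n)^2 \<le> 2/(Suc m) + 2/(Suc n)" for m n
  proof -
    have mid: "(1/2) *\<^sub>R (c m + c n) \<in> C"
      using convexD[OF assms(2) cC[of m] cC[of n], of "1/2" "1/2"] by (simp add: scaleR_right_distrib)
    have "d^2 \<le> norm (x - (1/2) *\<^sub>R (c m + c n))^2"
      using dle[OF mid] d0 by (simp add: power_mono)
    moreover have "norm (c m - c n)^2 = 2 * norm (x - c m)^2 + 2 * norm (x - c n)^2 - 4 * norm (x - (1/2) *\<^sub>R (c m + c n))^2"
      unfolding power2_norm_eq_inner by (simp add: inner_diff_left inner_diff_right inner_add_left inner_add_right inner_commute algebra_simps)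
    ultimately show ?thesis using cn[of m] cn[of n] by simp
  qed
  have "Cauchy c"
  proof (rule metric_CauchyI)
    fix e :: real assume "e > 0"
    obtain N :: nat where N: "4 / e^2 < N" using reals_Archimedean2 by blast
    show "\<exists>M. \<forall>m\<ge>M. \<forall>n\<ge>M. dist (c m) (c n) < e"
    proof (intro exI allI impI)
      fix m n assume "N \<le> m" "N \<le> n"
      have pos: "0 < real N" using N \<open>e>0\<close> by (smt (verit) divide_pos_pos zero_less_power)
      have "2/(Suc m) \<le> 2 / N" "2/(Suc n) \<le> 2/N" using \<open>N \<le> m\<close> \<open>N \<le> n\<close> pos
        by (auto intro!: divide_left_mono)
      then have "norm (c m - c n)^2 \<le> 4 / N" using par[of m n] by simp
      also have "\<dots> < e^2" using N pos \<open>e>0\<close> by (simp add: field_simps)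
      finally show "dist (c m) (c n) < e" using \<open>e>0\<close>
        by (simp add: dist_norm power_less_imp_less_base)
    qed
  qed
  then obtain p where p: "c \<longlonglongrightarrow> p" using Cauchy_convergent_iff convergent_def by blast
  have pC: "p \<in> C" using closed_sequentially[OF assms(1)] cC p by blast
  have "(\<lambda>n. norm (x - c n)^2) \<longlonglongrightarrow> norm (x - p)^2"
    by (intro tendsto_intros p)
  moreover have "(\<lambda>n. d^2 + 1/Suc n) \<longlonglongrightarrow> d^2 + 0"
    using LIMSEQ_Suc[OF lim_const_over_n[of 1]] by (intro tendsto_add tendsto_const) simp
  ultimately have "norm (x - p)^2 \<le> d^2"
    using cn by (intro LIMSEQ_le[where X="\<lambda>n. norm (x - c n)^2"]) (auto intro: less_imp_le)
  then have "norm (x - p) \<le> d" using d0 by (rule power2_le_imp_le)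
  then show ?thesis using pC dle by (meson order_trans)
qed


lemma min_imp_vi:
  fixes C :: "'a::real_inner set"
  assumes "convex C" "p \<in> C" "\<forall>y\<in>C. norm (x - p) \<le> norm (x - y)" "y \<in> C"
  shows "inner (x - p) (y - p) \<le> 0"
proof (rule ccontr)
  assume "\<not> ?thesis"
  then have s: "inner (x - p) (y - p) > 0" by simp
  define s where "s = inner (x - p) (y - p)"
  define n where "n = norm (y - p)^2"
  have "y \<noteq> p" using s by auto
  then have n0: "n > 0" unfolding n_def by simp
  define t where "t = min 1 (s / n)"
  have t0: "0 < t" "t \<le> 1" "t \<le> s/n" using s n0 unfolding t_def s_def by auto
  have "p + t *\<^sub>R (y - p) = (1 - t) *\<^sub>R p + t *\<^sub>R y" by (simp add: algebra_simps)
  also have "\<dots> \<in> C" using convexD[OF assms(1) assms(2) assms(4)] t0 by auto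
  finally have "norm (x - p) \<le> norm (x - (p + t *\<^sub>R (y - p)))" using assms(3) by blast
  then have "norm (x - p)^2 \<le> norm ((x - p) - t *\<^sub>R (y - p))^2"
    by (simp add: power_mono algebra_simps)
  also have "\<dots> = norm (x - p)^2 - 2 * t * s + t^2 * n"
    unfolding power2_norm_eq_inner s_def n_def
    by (simp add: inner_diff_left inner_diff_right inner_commute power2_eq_square algebra_simps)
  finally have "t * (t * n) \<ge> t * (2 * s)" by (simp add: power2_eq_square algebra_simps)
  then have "t * n \<ge> 2 * s" using t0 by simp
  moreover have "t * n \<le> s" using t0 n0 by (simp add: field_simps)
  ultimately show False using s unfolding s_def by simp
qed

lemma vi_imp_min:
  fixes C :: "'a::real_inner set"
  assumes "\<forall>y\<in>C. inner (x - p) (y - p) \<le> 0" "y \<in> C"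
  shows "norm (x - p) \<le> norm (x - y)"
proof -
  have "norm (x - y)^2 = norm (x - p)^2 - 2 * inner (x - p) (y - p) + norm (y - p)^2"
    unfolding power2_norm_eq_inner
    by (simp add: inner_diff_left inner_diff_right inner_commute algebra_simps)
  moreover have "inner (x - p) (y - p) \<le> 0" using assms by blast
  ultimately have "norm (x - p)^2 \<le> norm (x - y)^2" by (smt (verit) zero_le_power2)
  then show ?thesis using power2_le_imp_le norm_ge_zero by blast
qed

lemma vi_unique:
  fixes C :: "'a::real_inner set"
  assumes "p \<in> C" "q \<in> C" "\<forall>y\<in>C. inner (x - p) (y - p) \<le> 0" "\<forall>y\<in>C. inner (x - q) (y - q) \<le> 0"
  shows "p = q"
proof -
  have "inner (x - p) (q - p) \<le> 0" "inner (x - q) (p - q) \<le> 0" using assms by auto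
  then have "inner (q - p) (q - p) \<le> 0"
    by (simp add: inner_diff_left inner_diff_right inner_commute algebra_simps)
  then show ?thesis by (metis inner_eq_zero_iff eq_iff_diff_eq_0 inner_ge_zero order_antisym)
qed

lemma proj_spec:
  fixes C :: "'a::{real_inner,complete_space} set"
  assumes "closed C" "convex C" "C \<noteq> {}"
  shows "proj C x \<in> C \<and> (\<forall>y\<in>C. inner (x - proj C x) (y - proj C x) \<le> 0)"
proof -
  obtain p where p: "p \<in> C" "\<forall>y\<in>C. norm (x - p) \<le> norm (x - y)"
    using proj_exists[OF assms] by blast
  have ex1: "\<exists>!p. p \<in> C \<and> (\<forall>y\<in>C. norm (x - p) \<le> norm (x - y))"
  proof (rule ex1I[of _ p])
    show "p \<in> C \<and> (\<forall>y\<in>C. norm (x - p) \<le> norm (x - y))" using p by blast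
    fix q assume q: "q \<in> C \<and> (\<forall>y\<in>C. norm (x - q) \<le> norm (x - y))"
    show "q = p"
      using vi_unique[of q C p x] q p min_imp_vi[OF assms(2)] by blast
  qed
  have "proj C x \<in> C \<and> (\<forall>y\<in>C. norm (x - proj C x) \<le> norm (x - y))"
    unfolding proj_def by (rule theI'[OF ex1])
  then show ?thesis using min_imp_vi[OF assms(2)] by blast
qed

lemma proj_in: "closed C \<Longrightarrow> convex C \<Longrightarrow> C \<noteq> {} \<Longrightarrow> proj C x \<in> C"
  using proj_spec by blast

lemma proj_vi: "closed C \<Longrightarrow> convex C \<Longrightarrow> C \<noteq> {} \<Longrightarrow> y \<in> C \<Longrightarrow> inner (x - proj C x) (y - proj C x) \<le> 0"
  using proj_spec by blast

lemma proj_eqI: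
  assumes "closed C" "convex C" "C \<noteq> {}" "p \<in> C" "\<forall>y\<in>C. inner (x - p) (y - p) \<le> 0"
  shows "proj C x = p"
  using vi_unique[of "proj C x" C p x] proj_spec[OF assms(1-3), of x] assms(4,5) by blast

lemma proj_min: "closed C \<Longrightarrow> convex C \<Longrightarrow> C \<noteq> {} \<Longrightarrow> y \<in> C \<Longrightarrow> norm (x - proj C x) \<le> norm (x - y)"
  using proj_spec vi_imp_min by metis

lemma proj_firm:
  assumes "closed C" "convex C" "C \<noteq> {}"
  shows "norm (proj C x - proj C y)^2 \<le> inner (proj C x - proj C y) (x - y)"
proof -
  have "inner (x - proj C x) (proj C y - proj C x) \<le> 0" "inner (y - proj C y) (proj C x - proj C y) \<le> 0"
    using proj_vi[OF assms] proj_in[OF assms] by auto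
  then show ?thesis unfolding power2_norm_eq_inner
    by (simp add: inner_diff_left inner_diff_right inner_commute algebra_simps)
qed

lemma proj_nonexp:
  assumes "closed C" "convex C" "C \<noteq> {}"
  shows "norm (proj C x - proj C y) \<le> norm (x - y)"
proof -
  have "norm (proj C x - proj C y)^2 \<le> norm (proj C x - proj C y) * norm (x - y)"
    using proj_firm[OF assms, of x y] Cauchy_Schwarz_ineq2[of "proj C x - proj C y" "x - y"] by linarith
  then show ?thesis
    by (metis mult_le_cancel_left norm_ge_zero not_le power2_eq_square mult_zero_left order.trans)
qed

lemma proj_self: "closed C \<Longrightarrow> convex C \<Longrightarrow> y \<in> C \<Longrightarrow> proj C y = y"
  by (rule proj_eqI) auto

lemma refl_nonexp:
  assumes "closed C" "convex C" "C \<noteq> {}"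
  shows "norm (refl C x - refl C y) \<le> norm (x - y)"
proof -
  have "norm (refl C x - refl C y)^2 = 4 * norm (proj C x - proj C y)^2 - 4 * inner (proj C x - proj C y) (x - y) + norm (x - y)^2"
    unfolding refl_def power2_norm_eq_inner
    by (simp add: inner_diff_left inner_diff_right inner_commute algebra_simps)
  also have "\<dots> \<le> norm (x - y)^2" using proj_firm[OF assms, of x y] by simp
  finally show ?thesis using power2_le_imp_le norm_ge_zero by blast
qed

lemma DR_firm:
  assumes "closed A" "convex A" "A \<noteq> {}" "closed B" "convex B" "B \<noteq> {}"
  shows "norm (DR A B x - DR A B y)^2 + norm ((x - DR A B x) - (y - DR A B y))^2 \<le> norm (x - y)^2"
proof -
  define N where "N = (\<lambda>z. refl B (refl A z))"
  have T2: "z + N z = 2 *\<^sub>R DR A B z" for z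
    unfolding DR_def N_def refl_def by (simp add: algebra_simps scaleR_2)
  have T: "DR A B z = (1/2) *\<^sub>R (z + N z)" for z
    unfolding T2 by simp
  have "norm (N x - N y) \<le> norm (x - y)"
    unfolding N_def using refl_nonexp[OF assms(4-6)] refl_nonexp[OF assms(1-3)] order_trans by blast
  then have nn: "norm (N x - N y)^2 \<le> norm (x - y)^2" by (simp add: power_mono)
  have "norm (DR A B x - DR A B y)^2 + norm ((x - DR A B x) - (y - DR A B y))^2
      = (1/2) * norm (x - y)^2 + (1/2) * norm (N x - N y)^2"
    unfolding T power2_norm_eq_inner
    by (simp add: inner_diff_left inner_diff_right inner_add_left inner_add_right inner_commute algebra_simps)
  then show ?thesis using nn by linarith
qed


lemma weak_closed:
  fixes C :: "'a::{real_inner,complete_space} set"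
  assumes "closed C" "convex C" "C \<noteq> {}" "\<And>n. s n \<in> C" "weakly_conv s q"
  shows "q \<in> C"
proof -
  define p where "p = proj C q"
  have pC: "p \<in> C" using proj_in[OF assms(1-3)] p_def by blast
  have le: "inner (q - p) (s n - p) \<le> 0" for n
    using proj_vi[OF assms(1-3) assms(4)] p_def by blast
  have "(\<lambda>n. inner (s n) (q - p)) \<longlonglongrightarrow> inner q (q - p)"
    using assms(5) unfolding weakly_conv_def by blast
  then have "(\<lambda>n. inner (s n) (q - p) - inner p (q - p)) \<longlonglongrightarrow> inner q (q - p) - inner p (q - p)"
    by (rule tendsto_diff[OF _ tendsto_const])
  moreover have "inner (s n) (q - p) - inner p (q - p) \<le> 0" for n
    using le[of n] by (simp add: inner_diff_left inner_diff_right inner_commute)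
  ultimately have "inner q (q - p) - inner p (q - p) \<le> 0"
    by (intro LIMSEQ_le_const2) auto
  then have "inner (q - p) (q - p) \<le> 0" by (simp add: inner_diff_left)
  then have "q = p" by (metis inner_eq_zero_iff eq_iff_diff_eq_0 inner_ge_zero order_antisym)
  then show ?thesis using pC by simp
qed

lemma weak_plus_null:
  assumes "weakly_conv s q" "t \<longlonglongrightarrow> 0"
  shows "weakly_conv (\<lambda>n. s n + t n) q"
  unfolding weakly_conv_def
proof
  fix z
  have "(\<lambda>n. inner (t n) z) \<longlonglongrightarrow> inner 0 z"
    by (intro tendsto_intros assms(2))
  then show "(\<lambda>n. inner (s n + t n) z) \<longlonglongrightarrow> inner q z"
    using assms(1) unfolding weakly_conv_def inner_add_left
    by (metis (no_types) add.right_neutral inner_zero_left tendsto_add)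
qed

lemma weak_subseq:
  assumes "weakly_conv s q" "strict_mono r"
  shows "weakly_conv (s \<circ> r) q"
  using assms LIMSEQ_subseq_LIMSEQ unfolding weakly_conv_def by (fastforce simp: o_def)

lemma real_bw:
  fixes f :: "nat \<Rightarrow> real"
  assumes "\<And>n. \<bar>f n\<bar> \<le> K"
  shows "\<exists>r. strict_mono r \<and> convergent (f \<circ> r)"
proof -
  obtain r where r: "strict_mono r" "monoseq (\<lambda>n. f (r n))" using seq_monosub by blast
  have "Bseq (\<lambda>n. f (r n))" by (rule BseqI'[of _ K]) (use assms in auto)
  then have "convergent (\<lambda>n. f (r n))" using r(2) Bseq_monoseq_convergent by blast
  then show ?thesis using r(1) by (auto simp: o_def)
qed

lemma proj_subspace_orth:
  fixes S :: "'a::{real_inner,complete_space} set"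
  assumes "closed S" "subspace S" "u \<in> S"
  shows "inner (z - proj S z) u = 0"
proof -
  have cv: "convex S" using assms(2) subspace_imp_convex by blast
  have ne: "S \<noteq> {}" using assms(3) by blast
  have pS: "proj S z \<in> S" using proj_in[OF assms(1) cv ne] .
  have "proj S z + u \<in> S" "proj S z - u \<in> S"
    using pS assms(2,3) by (auto simp: subspace_add subspace_diff)
  then have "inner (z - proj S z) (proj S z + u - proj S z) \<le> 0" "inner (z - proj S z) (proj S z - u - proj S z) \<le> 0"
    using proj_vi[OF assms(1) cv ne] by blast+
  then show ?thesis by (simp add: inner_diff_right)
qed

lemma riesz:
  fixes l :: "'a::{real_inner,complete_space} \<Rightarrow> real"
  assumes ladd: "\<And>u v. l (u + v) = l u + l v" and lsc: "\<And>c u. l (c *\<^sub>R u) = c * l u"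
    and lb: "\<And>u. \<bar>l u\<bar> \<le> norm u * M"
  shows "\<exists>q. \<forall>z. l z = inner q z"
proof (cases "\<forall>z. l z = 0")
  case True then show ?thesis by (intro exI[of _ 0]) simp
next
  case False
  have bl: "bounded_linear l" by (rule bounded_linear_intro[of _ M]) (use ladd lsc lb in auto)
  have l0: "l 0 = 0" using lsc[of 0 0] by simp
  have ldiff: "l (u - v) = l u - l v" for u v
    using ladd[of u "(-1) *\<^sub>R v"] lsc[of "-1" v] by simp
  from False obtain z0 where z0: "l z0 \<noteq> 0" by blast
  define K where "K = {z. l z = 0}"
  have cl: "closed K" unfolding K_def
    by (intro closed_Collect_eq continuous_on_const linear_continuous_on bl)
  have sub: "subspace K" unfolding K_def subspace_def
    using ladd lsc l0 by auto
  have "0 \<in> K" using sub subspace_0 by blast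
  then have ne: "K \<noteq> {}" by blast
  have cv: "convex K" using sub subspace_imp_convex by blast
  define w where "w = z0 - proj K z0"
  have "proj K z0 \<in> K" using proj_in[OF cl cv ne] .
  then have lw: "l w = l z0" unfolding w_def K_def using ldiff by simp
  have orth: "inner w u = 0" if "u \<in> K" for u
    unfolding w_def using proj_subspace_orth[OF cl sub that] .
  have w0: "w \<noteq> 0" using lw z0 l0 by auto
  show ?thesis
  proof (intro exI[of _ "(l w / (inner w w)) *\<^sub>R w"] allI)
    fix z
    have "z - (l z / l w) *\<^sub>R w \<in> K"
      unfolding K_def using lw z0 ldiff lsc by simp
    then have "inner w (z - (l z / l w) *\<^sub>R w) = 0" using orth by blast
    then have "inner w z = (l z / l w) * inner w w" by (simp add: inner_diff_right)
    then show "l z = inner ((l w / (inner w w)) *\<^sub>R w) z"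
      using w0 lw z0 by (simp add: field_simps)
  qed
qed


lemma weak_compact:
  fixes s :: "nat \<Rightarrow> 'a::{real_inner,complete_space}"
  assumes sM: "\<And>n. norm (s n) \<le> M"
  shows "\<exists>r q. strict_mono r \<and> weakly_conv (s \<circ> r) q"
proof -
  have M0: "0 \<le> M" using sM[of 0] norm_ge_zero order_trans by blast
  have ibd: "\<bar>inner (s a) z\<bar> \<le> M * norm z" for a z
    using Cauchy_Schwarz_ineq2[of "s a" z] sM[of a] by (meson mult_right_mono norm_ge_zero order_trans)
  interpret S: subseqs "\<lambda>m r. convergent (\<lambda>k. inner (s (r k)) (s m))"
  proof
    fix m and sq :: "nat \<Rightarrow> nat" assume "strict_mono sq"
    obtain r' where "strict_mono r'" "convergent ((\<lambda>k. inner (s (sq k)) (s m)) \<circ> r')"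
      using real_bw[of "\<lambda>k. inner (s (sq k)) (s m)" "M * norm (s m)"] ibd by blast
    then show "\<exists>r'. strict_mono r' \<and> convergent (\<lambda>k. inner (s ((sq \<circ> r') k)) (s m))"
      by (auto simp: o_def)
  qed
  define r where "r = S.diagseq"
  have r: "strict_mono r" unfolding r_def by (rule S.subseq_diagseq)
  define y where "y = s \<circ> r"
  have yM: "norm (y k) \<le> M" for k unfolding y_def using sM by simp
  have conv_s: "convergent (\<lambda>k. inner (y k) (s m))" for m
  proof -
    have "convergent (\<lambda>n. inner (s ((S.diagseq \<circ> (+) (Suc m)) n)) (s m))"
    proof -
      have stable: "convergent (\<lambda>k. inner (s ((sq \<circ> rr) k)) (s n))"
        if "strict_mono rr" "convergent (\<lambda>k. inner (s (sq k)) (s n))" for rr sq n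
        using convergent_subseq_convergent[OF that(2) that(1)] by (simp add: o_def)
      show ?thesis by (rule S.diagseq_holds) (rule stable)
    qed
    then obtain L where "(\<lambda>n. inner (s (S.diagseq (n + Suc m))) (s m)) \<longlonglongrightarrow> L"
      unfolding convergent_def by (auto simp: o_def add.commute)
    then have "(\<lambda>n. inner (s (S.diagseq n)) (s m)) \<longlonglongrightarrow> L"
      by (rule LIMSEQ_offset)
    then show ?thesis unfolding y_def r_def convergent_def by (auto simp: o_def)
  qed
  define V where "V = {z. convergent (\<lambda>k. inner (y k) z)}"
  have sV: "s m \<in> V" for m unfolding V_def using conv_s by simp
  have subV: "subspace V"
    unfolding subspace_def
  proof (intro conjI ballI allI)
    show "0 \<in> V" unfolding V_def by (simp add: convergent_const)
  next
    fix a b assume "a \<in> V" "b \<in> V"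
    then show "a + b \<in> V" unfolding V_def by (simp add: inner_add_right convergent_add)
  next
    fix c :: real and a assume "a \<in> V"
    then obtain L where "(\<lambda>k. inner (y k) a) \<longlonglongrightarrow> L" unfolding V_def convergent_def by blast
    then have "(\<lambda>k. c * inner (y k) a) \<longlonglongrightarrow> c * L" by (rule tendsto_mult_left)
    then show "c *\<^sub>R a \<in> V" unfolding V_def convergent_def by auto
  qed
  have clV: "closed V"
    unfolding closed_sequential_limits
  proof (intro allI impI; elim conjE)
    fix zz :: "nat \<Rightarrow> 'a" and z assume zV: "\<forall>n. zz n \<in> V" and zl: "zz \<longlonglongrightarrow> z"
    have "Cauchy (\<lambda>k. inner (y k) z)"
    proof (rule metric_CauchyI)
      fix e :: real assume e: "e > 0"
      have "\<forall>\<^sub>F j in sequentially. dist (zz j) z < e / (4 * (M + 1))"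
        using zl e M0 by (intro tendstoD) auto
      then obtain j where j: "norm (zz j - z) < e / (4 * (M + 1))"
        unfolding dist_norm by (meson eventually_sequentially order_refl)
      have "Cauchy (\<lambda>k. inner (y k) (zz j))" using zV unfolding V_def by (simp add: Cauchy_convergent_iff)
      then obtain N where N: "\<And>m n. m \<ge> N \<Longrightarrow> n \<ge> N \<Longrightarrow> dist (inner (y m) (zz j)) (inner (y n) (zz j)) < e/2"
        using metric_CauchyD[of _ "e/2"] e by (meson half_gt_zero)
      show "\<exists>N. \<forall>m\<ge>N. \<forall>n\<ge>N. dist (inner (y m) z) (inner (y n) z) < e"
      proof (intro exI allI impI)
        fix m n assume mn: "m \<ge> N" "n \<ge> N"
        have b1: "\<bar>inner (y m) (z - zz j)\<bar> \<le> M * (e / (4 * (M + 1)))"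
          using Cauchy_Schwarz_ineq2[of "y m" "z - zz j"] yM[of m] j M0
          by (smt (verit) mult_mono norm_ge_zero norm_minus_commute)
        have b2: "\<bar>inner (y n) (z - zz j)\<bar> \<le> M * (e / (4 * (M + 1)))"
          using Cauchy_Schwarz_ineq2[of "y n" "z - zz j"] yM[of n] j M0
          by (smt (verit) mult_mono norm_ge_zero norm_minus_commute)
        have b3: "M * (e / (4 * (M + 1))) \<le> e / 4"
          using M0 e by (simp add: field_simps)
        have "inner (y m) z - inner (y n) z = (inner (y m) (zz j) - inner (y n) (zz j)) + inner (y m) (z - zz j) - inner (y n) (z - zz j)"
          by (simp add: inner_diff_right)
        then show "dist (inner (y m) z) (inner (y n) z) < e"
          using N[OF mn] b1 b2 b3 unfolding dist_real_def by linarith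
      qed
    qed
    then show "z \<in> V" unfolding V_def by (simp add: Cauchy_convergent_iff)
  qed
  have allV: "z \<in> V" for z
  proof -
    have cv: "convex V" using subV subspace_imp_convex by blast
    have ne: "V \<noteq> {}" using sV by blast
    define w where "w = proj V z"
    have wV: "w \<in> V" unfolding w_def using proj_in[OF clV cv ne] .
    have "inner (z - w) (y k) = 0" for k
      unfolding w_def y_def using proj_subspace_orth[OF clV subV sV] by simp
    then have "inner (y k) z = inner (y k) w" for k
      by (metis inner_commute inner_diff_left right_minus_eq)
    then show ?thesis using wV unfolding V_def by simp
  qed
  define l where "l z = lim (\<lambda>k. inner (y k) z)" for z
  have lt: "(\<lambda>k. inner (y k) z) \<longlonglongrightarrow> l z" for z
    using allV[of z] unfolding V_def l_def by (simp add: convergent_LIMSEQ_iff)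
  have ladd: "l (u + v) = l u + l v" for u v
  proof -
    have "(\<lambda>k. inner (y k) (u + v)) \<longlonglongrightarrow> l u + l v"
      unfolding inner_add_right by (intro tendsto_add lt)
    then show ?thesis using lt[of "u+v"] LIMSEQ_unique by blast
  qed
  have lsc: "l (c *\<^sub>R u) = c * l u" for c u
  proof -
    have "(\<lambda>k. inner (y k) (c *\<^sub>R u)) \<longlonglongrightarrow> c * l u"
      unfolding inner_scaleR_right by (intro tendsto_mult_left lt)
    then show ?thesis using lt[of "c *\<^sub>R u"] LIMSEQ_unique by blast
  qed
  have lb: "\<bar>l u\<bar> \<le> norm u * M" for u
  proof -
    have "(\<lambda>k. \<bar>inner (y k) u\<bar>) \<longlonglongrightarrow> \<bar>l u\<bar>" by (intro tendsto_rabs lt)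
    moreover have "\<bar>inner (y k) u\<bar> \<le> norm u * M" for k
      using Cauchy_Schwarz_ineq2[of "y k" u] yM[of k]
      by (smt (verit) mult.commute mult_right_mono norm_ge_zero)
    ultimately show ?thesis by (intro LIMSEQ_le_const2) auto
  qed
  obtain q where q: "\<And>z. l z = inner q z" using riesz[of l M] ladd lsc lb by blast
  have "weakly_conv y q" unfolding weakly_conv_def using lt q by simp
  then show ?thesis using r unfolding y_def by blast
qed

lemma weak_unique_cluster:
  fixes p :: "nat \<Rightarrow> 'a::{real_inner,complete_space}"
  assumes pM: "\<And>n. norm (p n) \<le> M"
    and uniq: "\<And>r1 r2 q1 q2. strict_mono r1 \<Longrightarrow> strict_mono r2 \<Longrightarrow> weakly_conv (p \<circ> r1) q1 \<Longrightarrow> weakly_conv (p \<circ> r2) q2 \<Longrightarrow> q1 = q2"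
  shows "\<exists>q. weakly_conv p q"
proof -
  obtain r0 q where r0: "strict_mono r0" "weakly_conv (p \<circ> r0) q" using weak_compact[of p M] pM by blast
  have "(\<lambda>n. inner (p n) z) \<longlonglongrightarrow> inner q z" for z
  proof (rule ccontr)
    assume "\<not> ?thesis"
    then obtain e where e: "e > 0" "\<not> (\<forall>\<^sub>F n in sequentially. dist (inner (p n) z) (inner q z) < e)"
      unfolding tendsto_iff by blast
    then have "\<forall>N. \<exists>n\<ge>N. dist (inner (p n) z) (inner q z) \<ge> e"
      unfolding eventually_sequentially by (meson not_le)
    then have "infinite {n. dist (inner (p n) z) (inner q z) \<ge> e}"
      using infinite_nat_iff_unbounded_le by auto
    from infinite_enumerate[OF this] obtain r1 :: "nat \<Rightarrow> nat" where
      r1': "strict_mono r1" "\<forall>n. r1 n \<in> {n. dist (inner (p n) z) (inner q z) \<ge> e}"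
      by blast
    then have r1: "strict_mono r1" "\<And>n. dist (inner (p (r1 n)) z) (inner q z) \<ge> e" by auto
    have "\<And>n. norm ((p \<circ> r1) n) \<le> M" using pM by simp
    then obtain r2 q2 where r2: "strict_mono r2" "weakly_conv ((p \<circ> r1) \<circ> r2) q2"
      using weak_compact[of "p \<circ> r1" M] by blast
    have sm: "strict_mono (r1 \<circ> r2)" using r1(1) r2(1) strict_mono_o by blast
    have "q2 = q" using uniq[OF sm r0(1)] r2(2) r0(2) by (simp add: o_assoc)
    then have "(\<lambda>n. inner (p (r1 (r2 n))) z) \<longlonglongrightarrow> inner q z"
      using r2(2) unfolding weakly_conv_def by (simp add: o_def)
    then have "\<forall>\<^sub>F n in sequentially. dist (inner (p (r1 (r2 n))) z) (inner q z) < e"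
      using e(1) tendstoD by blast
    then obtain n where "dist (inner (p (r1 (r2 n))) z) (inner q z) < e"
      using eventually_sequentially by (meson order_refl)
    then show False using r1(2)[of "r2 n"] by simp
  qed
  then show ?thesis unfolding weakly_conv_def by blast
qed


lemma PB_orth0:
  fixes B :: "'a::{real_inner,complete_space} set"
  assumes "closed B" "affine B" "B \<noteq> {}" "b \<in> B"
  shows "inner (w - proj B w) (b - proj B w) = 0"
proof -
  have cv: "convex B" using assms(2) affine_imp_convex by blast
  have P: "proj B w \<in> B" using proj_in[OF assms(1) cv assms(3)] .
  have b': "proj B w + 1 *\<^sub>R (proj B w - b) \<in> B" by (rule mem_affine_3_minus[OF assms(2) P P assms(4)])
  have "inner (w - proj B w) (b - proj B w) \<le> 0" using proj_vi[OF assms(1) cv assms(3) assms(4)] .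
  moreover have "inner (w - proj B w) ((proj B w + 1 *\<^sub>R (proj B w - b)) - proj B w) \<le> 0"
    using proj_vi[OF assms(1) cv assms(3) b'] .
  ultimately show ?thesis by (simp add: inner_diff_right)
qed

lemma PB_orth:
  fixes B :: "'a::{real_inner,complete_space} set"
  assumes "closed B" "affine B" "B \<noteq> {}" "b \<in> B" "b' \<in> B"
  shows "inner (w - proj B w) (b - b') = 0"
proof -
  have "b - b' = (b - proj B w) - (b' - proj B w)" by simp
  then show ?thesis using PB_orth0[OF assms(1-4)] PB_orth0[OF assms(1-3,5)]
    by (metis diff_zero inner_diff_right)
qed

lemma PB_eqI:
  fixes B :: "'a::{real_inner,complete_space} set"
  assumes "closed B" "affine B" "B \<noteq> {}" "p \<in> B" "\<And>b. b \<in> B \<Longrightarrow> inner (w - p) (b - p) = 0"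
  shows "proj B w = p"
  using assms affine_imp_convex by (intro proj_eqI) auto

lemma PB_3:
  fixes B :: "'a::{real_inner,complete_space} set"
  assumes "closed B" "affine B" "B \<noteq> {}"
  shows "proj B (u + v - z) = proj B u + proj B v - proj B z"
proof -
  have cv: "convex B" using assms(2) affine_imp_convex by blast
  have P: "proj B t \<in> B" for t using proj_in[OF assms(1) cv assms(3)] .
  have pB: "proj B u + 1 *\<^sub>R (proj B v - proj B z) \<in> B" by (rule mem_affine_3_minus[OF assms(2) P P P])
  show ?thesis
  proof (rule PB_eqI[OF assms])
    show "proj B u + proj B v - proj B z \<in> B" using pB by (simp add: algebra_simps)
    fix b assume b: "b \<in> B"
    have pB': "proj B u + proj B v - proj B z \<in> B" using pB by (simp add: algebra_simps)
    have "u + v - z - (proj B u + proj B v - proj B z) = (u - proj B u) + (v - proj B v) - (z - proj B z)"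
      by (simp add: algebra_simps)
    then show "inner (u + v - z - (proj B u + proj B v - proj B z)) (b - (proj B u + proj B v - proj B z)) = 0"
      using PB_orth[OF assms b pB', of u] PB_orth[OF assms b pB', of v] PB_orth[OF assms b pB', of z]
      by (simp add: inner_diff_left inner_add_left)
  qed
qed

lemma PB_shift:
  fixes B :: "'a::{real_inner,complete_space} set"
  assumes "closed B" "affine B" "B \<noteq> {}" "\<And>b b'. b \<in> B \<Longrightarrow> b' \<in> B \<Longrightarrow> inner g (b - b') = 0"
  shows "proj B (w + t *\<^sub>R g) = proj B w"
proof -
  have cv: "convex B" using assms(2) affine_imp_convex by blast
  have P: "proj B w \<in> B" using proj_in[OF assms(1) cv assms(3)] .
  show ?thesis
  proof (rule PB_eqI[OF assms(1-3) P])
    fix b assume b: "b \<in> B"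
    have e: "w + t *\<^sub>R g - proj B w = (w - proj B w) + t *\<^sub>R g" by simp
    show "inner (w + t *\<^sub>R g - proj B w) (b - proj B w) = 0"
      using PB_orth0[OF assms(1-3) b, of w] assms(4)[OF b P] unfolding e by (simp add: inner_add_left)
  qed
qed


lemma weak_const_add:
  assumes "weakly_conv s q"
  shows "weakly_conv (\<lambda>n. s n + c) (q + c)"
  using assms unfolding weakly_conv_def inner_add_left by (auto intro: tendsto_add)

lemma main:
  fixes A B :: "'a::{real_inner,complete_space} set"
  assumes cA: "closed A" "convex A" "A \<noteq> {}"
    and cB: "closed B" "affine B" "B \<noteq> {}"
    and gA: "\<And>a b. a \<in> A \<Longrightarrow> b \<in> B \<Longrightarrow> inner g (b - a) \<ge> inner g g"
    and a0: "a0 \<in> A" "a0 + g \<in> B"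
  shows "\<exists>f. f \<in> B \<and> f - g \<in> A \<and> weakly_conv (\<lambda>n. proj A ((DR A B ^^ n) x)) (f - g)
             \<and> weakly_conv (\<lambda>n. proj B ((DR A B ^^ n) x)) f"
proof -
  have cvB: "convex B" using cB(2) affine_imp_convex by blast
  note cB' = cB(1) cvB cB(3)
  have gorth: "inner g (b - b') = 0" if "b \<in> B" "b' \<in> B" for b b'
  proof -
    have "a0 + g + t *\<^sub>R (b - b') \<in> B" for t using mem_affine_3_minus[OF cB(2) a0(2) that] .
    then have "inner g (a0 + g + t *\<^sub>R (b - b') - a0) \<ge> inner g g" for t using gA[OF a0(1)] by blast
    then have "t * inner g (b - b') \<ge> 0" for t by (simp add: inner_add_right inner_diff_right)
    from this[of 1] this[of "-1"] show ?thesis by simp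
  qed
  define E where "E = {e. e \<in> A \<and> e + g \<in> B}"
  have a0E: "a0 \<in> E" using a0 E_def by simp
  have PAe: "proj A (e + t *\<^sub>R g) = e" if "e \<in> E" "t \<ge> 0" for e t
  proof (rule proj_eqI[OF cA])
    show "e \<in> A" using that E_def by simp
    show "\<forall>y\<in>A. inner (e + t *\<^sub>R g - e) (y - e) \<le> 0"
    proof
      fix a assume a: "a \<in> A"
      have "inner g (e + g - a) \<ge> inner g g" using gA[OF a] that E_def by simp
      then have "inner g (a - e) \<le> 0" by (simp add: inner_add_right inner_diff_right)
      then show "inner (e + t *\<^sub>R g - e) (a - e) \<le> 0" using that(2)
        by (simp add: mult_nonneg_nonpos)
    qed
  qed
  have PBe: "proj B (e - t *\<^sub>R g) = e + g" if "e \<in> E" for e t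
  proof (rule PB_eqI[OF cB])
    show eg: "e + g \<in> B" using that E_def by simp
    fix b assume "b \<in> B"
    have "e - t *\<^sub>R g - (e + g) = (- (t + 1)) *\<^sub>R g" by (simp add: algebra_simps)
    then show "inner (e - t *\<^sub>R g - (e + g)) (b - (e + g)) = 0"
      using gorth[OF \<open>b \<in> B\<close> eg] by simp
  qed
  have DRe: "DR A B (e + t *\<^sub>R g) = e + (t + 1) *\<^sub>R g" if "e \<in> E" "t \<ge> 0" for e t
  proof -
    have R: "refl A (e + t *\<^sub>R g) = e - t *\<^sub>R g" unfolding refl_def PAe[OF that] by (simp add: algebra_simps scaleR_2)
    show ?thesis unfolding DR_def R PAe[OF that] PBe[OF that(1)] by (simp add: algebra_simps)
  qed
  define y where "y n = (DR A B ^^ n) x" for n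
  define an where "an n = proj A (y n)" for n
  define bn where "bn n = proj B (refl A (y n))" for n
  have ySuc: "y (Suc n) = y n - an n + bn n" for n
    unfolding y_def an_def bn_def by (simp add: DR_def)
  have anA: "an n \<in> A" for n unfolding an_def using proj_in[OF cA] .
  have bnB: "bn n \<in> B" for n unfolding bn_def using proj_in[OF cB'] .
  define r where "r n = y n - real n *\<^sub>R g" for n
  have fejer: "norm (r (Suc n) - e)^2 + norm (r n - r (Suc n))^2 \<le> norm (r n - e)^2" if "e \<in> E" for n e
  proof -
    have f: "norm (DR A B (y n) - DR A B (e + real n *\<^sub>R g))^2
       + norm ((y n - DR A B (y n)) - ((e + real n *\<^sub>R g) - DR A B (e + real n *\<^sub>R g)))^2
       \<le> norm (y n - (e + real n *\<^sub>R g))^2"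
      using DR_firm[OF cA cB'] by blast
    have 1: "DR A B (y n) - DR A B (e + real n *\<^sub>R g) = r (Suc n) - e"
      unfolding DRe[OF that of_nat_0_le_iff] r_def y_def by (simp add: algebra_simps)
    have 2: "(y n - DR A B (y n)) - ((e + real n *\<^sub>R g) - DR A B (e + real n *\<^sub>R g)) = r n - r (Suc n)"
      unfolding DRe[OF that of_nat_0_le_iff] r_def y_def by (simp add: algebra_simps)
    have 3: "y n - (e + real n *\<^sub>R g) = r n - e" unfolding r_def by simp
    show ?thesis using f unfolding 1 2 3 .
  qed
  have dec: "norm (r (Suc n) - e)^2 \<le> norm (r n - e)^2" if "e \<in> E" for n e
    using fejer[OF that, of n] by (smt (verit) zero_le_power2)
  have dle0: "norm (r n - e)^2 \<le> norm (r 0 - e)^2" if "e \<in> E" for n e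
    by (induction n) (use dec[OF that] order_trans in auto)
  have nle0: "norm (r n - e) \<le> norm (r 0 - e)" if "e \<in> E" for n e
    using dle0[OF that] power2_le_imp_le norm_ge_zero by blast
  have dconv: "convergent (\<lambda>n. norm (r n - e)^2)" if "e \<in> E" for e
  proof (rule Bseq_monoseq_convergent)
    show "Bseq (\<lambda>n. norm (r n - e)^2)" by (rule BseqI'[of _ "norm (r 0 - e)^2"]) (use dle0[OF that] in auto)
    show "monoseq (\<lambda>n. norm (r n - e)^2)" unfolding monoseq_iff decseq_Suc_iff using dec[OF that] by blast
  qed
  have rstep: "(\<lambda>n. r (Suc n) - r n) \<longlonglongrightarrow> 0"
  proof -
    obtain L where L: "(\<lambda>n. norm (r n - a0)^2) \<longlonglongrightarrow> L" using dconv[OF a0E] convergent_def by blast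
    have "(\<lambda>n. norm (r n - a0)^2 - norm (r (Suc n) - a0)^2) \<longlonglongrightarrow> L - L"
      by (intro tendsto_diff L LIMSEQ_Suc[OF L])
    then have h: "(\<lambda>n. norm (r n - a0)^2 - norm (r (Suc n) - a0)^2) \<longlonglongrightarrow> 0" by simp
    have hi: "\<forall>\<^sub>F n in sequentially. norm (r n - r (Suc n))^2 \<le> norm (r n - a0)^2 - norm (r (Suc n) - a0)^2"
      using fejer[OF a0E] by (intro always_eventually allI) (smt (verit))
    have lo: "\<forall>\<^sub>F n in sequentially. (0::real) \<le> norm (r n - r (Suc n))^2"
      by (intro always_eventually allI) simp
    have "(\<lambda>n. norm (r n - r (Suc n))^2) \<longlonglongrightarrow> 0"
      by (rule tendsto_sandwich[OF lo hi tendsto_const h])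
    then have "(\<lambda>n. sqrt (norm (r n - r (Suc n))^2)) \<longlonglongrightarrow> sqrt 0" by (intro tendsto_real_sqrt)
    then have "(\<lambda>n. norm (r (Suc n) - r n)) \<longlonglongrightarrow> 0" by (simp add: norm_minus_commute)
    then show ?thesis using tendsto_norm_zero_iff by blast
  qed
  have rdiff: "r (Suc n) - r n = bn n - an n - g" for n
    unfolding r_def ySuc by (simp add: algebra_simps)
  define pn where "pn n = proj B (an n)" for n
  have PBy: "proj B (y (Suc n)) = pn n" for n
  proof -
    have "y (Suc n) = an n + bn n - refl A (y n)" unfolding ySuc refl_def an_def by (simp add: algebra_simps scaleR_2)
    then have "proj B (y (Suc n)) = proj B (an n) + proj B (bn n) - proj B (refl A (y n))"
      using PB_3[OF cB] by simp
    also have "\<dots> = pn n" unfolding pn_def using proj_self[OF cB(1) cvB bnB[of n]] bn_def by simp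
    finally show ?thesis .
  qed
  have pnr: "pn n = proj B (r (Suc n))" for n
  proof -
    have "r (Suc n) = y (Suc n) + (- real (Suc n)) *\<^sub>R g" unfolding r_def scaleR_minus_left by (simp only: diff_conv_add_uminus)
    then show ?thesis using PB_shift[OF cB gorth] PBy by metis
  qed
  have null: "(\<lambda>n. an n + g - pn n) \<longlonglongrightarrow> 0"
  proof -
    have "norm (an n + g - pn n) \<le> norm (r (Suc n) - r n)" for n
    proof -
      have "pn n = proj B (an n + 1 *\<^sub>R g)" unfolding pn_def using PB_shift[OF cB gorth] by metis
      then have "norm (an n + g - pn n) \<le> norm (an n + g - bn n)"
        using proj_min[OF cB' bnB[of n], of "an n + g"] by simp
      also have "\<dots> = norm (r (Suc n) - r n)" 
      proof -
        have "an n + g - bn n = - (bn n - an n - g)" by (simp add: algebra_simps)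
        then show ?thesis unfolding rdiff by (simp only: norm_minus_cancel)
      qed
      finally show ?thesis .
    qed
    then have hi: "\<forall>\<^sub>F n in sequentially. norm (an n + g - pn n) \<le> norm (r (Suc n) - r n)"
      by (intro always_eventually allI)
    have lo: "\<forall>\<^sub>F n in sequentially. (0::real) \<le> norm (an n + g - pn n)"
      by (intro always_eventually allI) simp
    have h: "(\<lambda>n. norm (r (Suc n) - r n)) \<longlonglongrightarrow> 0" by (rule tendsto_norm_zero[OF rstep])
    have "(\<lambda>n. norm (an n + g - pn n)) \<longlonglongrightarrow> 0"
      by (rule tendsto_sandwich[OF lo hi tendsto_const h])
    then show ?thesis by (rule tendsto_norm_zero_cancel)
  qed
  have anpn: "an n = (pn n - g) + (an n + g - pn n)" for n by simp
  have pbound: "norm (pn n) \<le> norm (proj B a0) + norm (r 0 - a0)" for n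
  proof -
    have "norm (pn n - proj B a0) \<le> norm (r (Suc n) - a0)" unfolding pnr by (rule proj_nonexp[OF cB'])
    also have "\<dots> \<le> norm (r 0 - a0)" by (rule nle0[OF a0E])
    finally show ?thesis by (smt (verit) norm_triangle_sub)
  qed
  have opial: "convergent (\<lambda>n. inner (pn n) (e2 - e1))" if "e1 \<in> E" "e2 \<in> E" for e1 e2
  proof -
    note ee = that
    have eq: "inner (r m) (e2 - e1) = (norm (r m - e1)^2 - norm (r m - e2)^2 - norm e1^2 + norm e2^2) / 2" for m
      unfolding power2_norm_eq_inner by (simp add: inner_diff_left inner_diff_right inner_commute field_simps)
    obtain L1 L2 where L1: "(\<lambda>n. norm (r n - e1)^2) \<longlonglongrightarrow> L1" and L2: "(\<lambda>n. norm (r n - e2)^2) \<longlonglongrightarrow> L2"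
      using dconv[OF ee(1)] dconv[OF ee(2)] convergent_def by blast
    have "(\<lambda>m. (norm (r m - e1)^2 - norm (r m - e2)^2 - norm e1^2 + norm e2^2) / 2) \<longlonglongrightarrow> (L1 - L2 - norm e1^2 + norm e2^2) / 2"
      by (intro tendsto_divide tendsto_add tendsto_diff L1 L2 tendsto_const) auto
    then have "convergent (\<lambda>m. (norm (r m - e1)^2 - norm (r m - e2)^2 - norm e1^2 + norm e2^2) / 2)"
      unfolding convergent_def by blast
    then have c: "convergent (\<lambda>m. inner (r m) (e2 - e1))" unfolding eq .
    have "inner (pn n) (e2 - e1) = inner (r (Suc n)) (e2 - e1)" for n
    proof -
      have "e2 - e1 = (e2 + g) - (e1 + g)" by simp
      then have "inner (r (Suc n) - pn n) (e2 - e1) = 0"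
        unfolding pnr using PB_orth[OF cB, of "e2 + g" "e1 + g"] ee E_def by simp
      then show ?thesis by (simp add: inner_diff_left)
    qed
    moreover have "convergent (\<lambda>n. inner (r (Suc n)) (e2 - e1))"
    proof -
      obtain L where "(\<lambda>m. inner (r m) (e2 - e1)) \<longlonglongrightarrow> L" using c convergent_def by blast
      then have "(\<lambda>n. inner (r (Suc n)) (e2 - e1)) \<longlonglongrightarrow> L" by (rule LIMSEQ_Suc)
      then show ?thesis unfolding convergent_def by blast
    qed
    ultimately show ?thesis by simp
  qed
  have cluster: "q \<in> B \<and> q - g \<in> A" if "strict_mono \<phi>" "weakly_conv (pn \<circ> \<phi>) q" for \<phi> q
  proof -
    have qB: "q \<in> B" using weak_closed[OF cB', of "pn \<circ> \<phi>"] that(2) pn_def proj_in[OF cB'] by simp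
    have "weakly_conv (\<lambda>k. (pn \<circ> \<phi>) k + (- g)) (q + (- g))" by (rule weak_const_add[OF that(2)])
    moreover have "(\<lambda>k. an (\<phi> k) + g - pn (\<phi> k)) \<longlonglongrightarrow> 0"
      using LIMSEQ_subseq_LIMSEQ[OF null that(1)] by (simp add: o_def)
    ultimately have "weakly_conv (\<lambda>k. ((pn \<circ> \<phi>) k + (- g)) + (an (\<phi> k) + g - pn (\<phi> k))) (q + (- g))"
      by (rule weak_plus_null)
    then have "weakly_conv (an \<circ> \<phi>) (q - g)" by (simp add: o_def)
    then have "q - g \<in> A" using weak_closed[OF cA, of "an \<circ> \<phi>"] anA by simp
    then show ?thesis using qB by simp
  qed
  have uniq: "q1 = q2" if "strict_mono r1" "strict_mono r2" "weakly_conv (pn \<circ> r1) q1" "weakly_conv (pn \<circ> r2) q2" for r1 r2 q1 q2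
  proof -
    have e1: "q1 - g \<in> E" using cluster[OF that(1,3)] E_def by simp
    have e2: "q2 - g \<in> E" using cluster[OF that(2,4)] E_def by simp
    obtain L where L: "(\<lambda>n. inner (pn n) ((q2 - g) - (q1 - g))) \<longlonglongrightarrow> L"
      using opial[OF e1 e2] convergent_def by blast
    have "(\<lambda>k. inner ((pn \<circ> r1) k) ((q2 - g) - (q1 - g))) \<longlonglongrightarrow> L"
      using LIMSEQ_subseq_LIMSEQ[OF L that(1)] by (simp add: o_def)
    moreover have "(\<lambda>k. inner ((pn \<circ> r1) k) ((q2 - g) - (q1 - g))) \<longlonglongrightarrow> inner q1 ((q2 - g) - (q1 - g))"
      using that(3) unfolding weakly_conv_def by blast
    ultimately have l1: "inner q1 (q2 - q1) = L" using LIMSEQ_unique by fastforce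
    have "(\<lambda>k. inner ((pn \<circ> r2) k) ((q2 - g) - (q1 - g))) \<longlonglongrightarrow> L"
      using LIMSEQ_subseq_LIMSEQ[OF L that(2)] by (simp add: o_def)
    moreover have "(\<lambda>k. inner ((pn \<circ> r2) k) ((q2 - g) - (q1 - g))) \<longlonglongrightarrow> inner q2 ((q2 - g) - (q1 - g))"
      using that(4) unfolding weakly_conv_def by blast
    ultimately have l2: "inner q2 (q2 - q1) = L" using LIMSEQ_unique by fastforce
    have "inner (q2 - q1) (q2 - q1) = 0" using l1 l2 by (simp add: inner_diff_left)
    then show ?thesis by simp
  qed
  obtain f where f: "weakly_conv pn f"
    using weak_unique_cluster[of pn "norm (proj B a0) + norm (r 0 - a0)"] pbound uniq by blast
  have fc: "f \<in> B \<and> f - g \<in> A" using cluster[of id f] f strict_mono_id by simp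
  have wa: "weakly_conv an (f - g)"
  proof -
    have "weakly_conv (\<lambda>n. (pn n + (- g)) + (an n + g - pn n)) (f + (- g))"
      by (intro weak_plus_null weak_const_add f null)
    then show ?thesis by simp
  qed
  have wb: "weakly_conv (\<lambda>n. proj B (y n)) f"
    unfolding weakly_conv_def
  proof
    fix z
    have "(\<lambda>n. inner (proj B (y (Suc n))) z) \<longlonglongrightarrow> inner f z" unfolding PBy using f weakly_conv_def by blast
    then show "(\<lambda>n. inner (proj B (y n)) z) \<longlonglongrightarrow> inner f z" by (rule LIMSEQ_imp_Suc)
  qed
  show ?thesis using fc wa wb unfolding an_def y_def by blast
qed


theorem theorem2p5:
  fixes A B :: "'a::{real_inner,complete_space} set" and x :: 'a
  assumes "A \<noteq> {}" "closed A" "convex A"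
    and "B \<noteq> {}" "closed B" "affine B"
    and "proj (closure {b - a | a b. a \<in> A \<and> b \<in> B}) 0 \<in> {b - a | a b. a \<in> A \<and> b \<in> B}"
  shows "(\<exists>e \<in> A \<inter> {b - proj (closure {b - a | a b. a \<in> A \<and> b \<in> B}) 0 | b. b \<in> B}.
            weakly_conv (\<lambda>n. proj A ((DR A B ^^ n) x)) e)
       \<and> (\<exists>f \<in> {a + proj (closure {b - a | a b. a \<in> A \<and> b \<in> B}) 0 | a. a \<in> A} \<inter> B.
            weakly_conv (\<lambda>n. proj B ((DR A B ^^ n) x)) f)"
proof -
  define S where "S = {b - a | a b. a \<in> A \<and> b \<in> B}"
  define g where "g = proj (closure S) 0"
  have cvB: "convex B" using assms(6) affine_imp_convex by blast
  have cS: "convex S" unfolding S_def convex_def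
  proof (intro ballI allI impI)
    fix u v :: real and p q
    assume p: "p \<in> {b - a | a b. a \<in> A \<and> b \<in> B}" and q: "q \<in> {b - a | a b. a \<in> A \<and> b \<in> B}"
      and uv: "0 \<le> u" "0 \<le> v" "u + v = 1"
    obtain a1 b1 where 1: "p = b1 - a1" "a1 \<in> A" "b1 \<in> B" using p by blast
    obtain a2 b2 where 2: "q = b2 - a2" "a2 \<in> A" "b2 \<in> B" using q by blast
    have "u *\<^sub>R p + v *\<^sub>R q = (u *\<^sub>R b1 + v *\<^sub>R b2) - (u *\<^sub>R a1 + v *\<^sub>R a2)"
      unfolding 1 2 by (simp add: algebra_simps)
    moreover have "u *\<^sub>R a1 + v *\<^sub>R a2 \<in> A" using convexD[OF assms(3) 1(2) 2(2)] uv by blast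
    moreover have "u *\<^sub>R b1 + v *\<^sub>R b2 \<in> B" using convexD[OF cvB 1(3) 2(3)] uv by blast
    ultimately show "u *\<^sub>R p + v *\<^sub>R q \<in> {b - a | a b. a \<in> A \<and> b \<in> B}" by blast
  qed
  have SD: "S \<subseteq> closure S" by (rule closure_subset)
  have neS: "S \<noteq> {}" using assms(1,4) unfolding S_def by blast
  have cD: "closed (closure S)" "convex (closure S)" "closure S \<noteq> {}"
    using cS neS by (auto intro: convex_closure)
  have gS: "g \<in> S" using assms(7) unfolding S_def[symmetric] g_def[symmetric] .
  obtain a0 b0 where ab0: "g = b0 - a0" "a0 \<in> A" "b0 \<in> B"
    using gS unfolding S_def by blast
  have a0g: "a0 + g \<in> B" using ab0 by simp
  have gA: "inner g (b - a) \<ge> inner g g" if "a \<in> A" "b \<in> B" for a b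
  proof -
    have "b - a \<in> closure S" using SD that unfolding S_def by blast
    then have "inner (0 - g) ((b - a) - g) \<le> 0" unfolding g_def by (rule proj_vi[OF cD])
    then show ?thesis by (simp add: inner_diff_right)
  qed
  obtain f where f: "f \<in> B" "f - g \<in> A" "weakly_conv (\<lambda>n. proj A ((DR A B ^^ n) x)) (f - g)"
    "weakly_conv (\<lambda>n. proj B ((DR A B ^^ n) x)) f"
    using main[OF assms(2,3,1,5,6,4) gA ab0(2) a0g, of x] by blast
  have "f - g \<in> A \<inter> {b - g | b. b \<in> B}" using f by blast
  moreover have "f \<in> {a + g | a. a \<in> A} \<inter> B" using f by force
  ultimately show ?thesis unfolding S_def[symmetric] g_def[symmetric] using f by blast
qed

end
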